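(* Assume that the linear program $$\min_{q\ge0}\sum_{s,a}q(s,a)c(s,a)\ \text{ s.t. }\ \sum_{a}q(s,a)=1+\sum_{s'\in\mathcal S,a}q(s',a)\hat P(s|s',a)\ \ \forall s\in\mathcal S$$ has a feasible solution. Then the optimal value of Program (A) $$\max_{x\in\mathbb{R}^N}\sum_{s\in\mathcal S}x_s\ \text{ s.t. }\ x_s\le c(s,a)+\sum_{s'}\hat P(s'|s,a)x_{s'}+\mathrm{CB}_{\min}(s,a)(x)\ \ \forall s\in\mathcal S,a\in\mathcal A(s)$$ equals the optimal value of Program (B) $$\min_{q\ge 0,\ \tilde P}\ \sum_{s,a}q(s,a)c(s,a)\ \text{ s.t. }\ \tilde P(\cdot|s,a)\in\mathcal P_\epsilon(s,a)\ \forall (s,a),\quad \sum_a q(s,a)=1+\sum_{s',a}q(s',a)\tilde P(s|s',a)\ \ \forall s\in\mathcal S,$$ i.e. there is no duality gap between (A) and (B).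
   Context: SSP setting with finite states $\mathcal S=\{1,\dots,N\}$, finite action sets $\mathcal A(s)$, known costs $c(s,a)\in[0,1]$, and an estimated substochastic transition function $\hat P(s'|s,a)\ge0$, $\sum_{s'\in\mathcal S}\hat P(s'|s,a)\le 1$. Let $\Delta_{\mathcal S}=\{p\in\mathbb{R}^{\mathcal S}: p\ge0,\ \sum_{s'}p_{s'}\le1\}$. Let $D:\mathbb{R}_{\ge0}^{\mathcal S}\times\mathbb{R}_{\ge0}^{\mathcal S}\to[0,\infty)$ be jointly convex, with $D(p,p)=0$, and positively homogeneous: $D(\alpha p,\alpha p')=\alpha D(p,p')$ for all $\alpha\ge0$. Let $\epsilon(s,a)>0$. Define $\mathcal P_\epsilon(s,a)=\{\tilde p\in\Delta_{\mathcal S}: D(\tilde p,\hat P(\cdot|s,a))\le\epsilon(s,a)\}$ and, for $x\in\mathbb{R}^N$, $\mathrm{CB}_{\min}(s,a)(x)=\min_{\tilde p\in\mathcal P_\epsilon(s,a)}\sum_{s'\in\mathcal S}(\tilde p_{s'}-\hat P(s'|s,a))x_{s'}$. *)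

theory Defs
  imports Complex_Main "HOL-Library.Extended_Real"
begin

definition subprob_simplex :: "('s::finite \<Rightarrow> real) set" where
  "subprob_simplex = {p. (\<forall>s. 0 \<le> p s) \<and> (\<Sum>s\<in>UNIV. p s) \<le> 1}"

definition nonneg_vec :: "('s \<Rightarrow> real) \<Rightarrow> bool" where
  "nonneg_vec p \<longleftrightarrow> (\<forall>s. 0 \<le> p s)"

definition divergence_ok :: "(('s \<Rightarrow> real) \<Rightarrow> ('s \<Rightarrow> real) \<Rightarrow> real) \<Rightarrow> bool" where
  "divergence_ok D \<longleftrightarrow>
     (\<forall>p p'. nonneg_vec p \<and> nonneg_vec p' \<longrightarrow> 0 \<le> D p p') \<and>
     (\<forall>p. nonneg_vec p \<longrightarrow> D p p = 0) \<and>
     (\<forall>p p' r r' t. nonneg_vec p \<and> nonneg_vec p' \<and> nonneg_vec r \<and> nonneg_vec r'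
        \<and> 0 \<le> t \<and> t \<le> 1 \<longrightarrow>
        D (\<lambda>s. t * p s + (1 - t) * r s) (\<lambda>s. t * p' s + (1 - t) * r' s)
          \<le> t * D p p' + (1 - t) * D r r') \<and>
     (\<forall>p p' (\<alpha>::real). nonneg_vec p \<and> nonneg_vec p' \<and> 0 \<le> \<alpha> \<longrightarrow>
        D (\<lambda>s. \<alpha> * p s) (\<lambda>s. \<alpha> * p' s) = \<alpha> * D p p')"

definition Peps ::
  "(('s::finite \<Rightarrow> real) \<Rightarrow> ('s \<Rightarrow> real) \<Rightarrow> real) \<Rightarrow> ('s \<Rightarrow> 'a \<Rightarrow> 's \<Rightarrow> real)
   \<Rightarrow> ('s \<Rightarrow> 'a \<Rightarrow> real) \<Rightarrow> 's \<Rightarrow> 'a \<Rightarrow> ('s \<Rightarrow> real) set" where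
  "Peps D Phat eps s a = {p \<in> subprob_simplex. D p (Phat s a) \<le> eps s a}"

text \<open>CB_min, written as an infimum (the paper's min).\<close>
definition CBmin ::
  "(('s::finite \<Rightarrow> real) \<Rightarrow> ('s \<Rightarrow> real) \<Rightarrow> real) \<Rightarrow> ('s \<Rightarrow> 'a \<Rightarrow> 's \<Rightarrow> real)
   \<Rightarrow> ('s \<Rightarrow> 'a \<Rightarrow> real) \<Rightarrow> 's \<Rightarrow> 'a \<Rightarrow> ('s \<Rightarrow> real) \<Rightarrow> real" where
  "CBmin D Phat eps s a x =
     Inf ((\<lambda>p. \<Sum>s'\<in>UNIV. (p s' - Phat s a s') * x s') ` Peps D Phat eps s a)"

definition feasA ::
  "('s::finite \<Rightarrow> 'a set) \<Rightarrow> ('s \<Rightarrow> 'a \<Rightarrow> real) \<Rightarrow> (('s \<Rightarrow> real) \<Rightarrow> ('s \<Rightarrow> real) \<Rightarrow> real)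
   \<Rightarrow> ('s \<Rightarrow> 'a \<Rightarrow> 's \<Rightarrow> real) \<Rightarrow> ('s \<Rightarrow> 'a \<Rightarrow> real) \<Rightarrow> ('s \<Rightarrow> real) set" where
  "feasA A c D Phat eps = {x. \<forall>s. \<forall>a\<in>A s.
      x s \<le> c s a + (\<Sum>s'\<in>UNIV. Phat s a s' * x s') + CBmin D Phat eps s a x}"

definition feasB ::
  "('s::finite \<Rightarrow> 'a set) \<Rightarrow> (('s \<Rightarrow> real) \<Rightarrow> ('s \<Rightarrow> real) \<Rightarrow> real)
   \<Rightarrow> ('s \<Rightarrow> 'a \<Rightarrow> 's \<Rightarrow> real) \<Rightarrow> ('s \<Rightarrow> 'a \<Rightarrow> real)
   \<Rightarrow> (('s \<Rightarrow> 'a \<Rightarrow> real) \<times> ('s \<Rightarrow> 'a \<Rightarrow> 's \<Rightarrow> real)) set" where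
  "feasB A D Phat eps = {(q, P).
      (\<forall>s. \<forall>a\<in>A s. 0 \<le> q s a \<and> P s a \<in> Peps D Phat eps s a) \<and>
      (\<forall>s. (\<Sum>a\<in>A s. q s a) = 1 + (\<Sum>s'\<in>UNIV. \<Sum>a\<in>A s'. q s' a * P s' a s))}"

definition occ_cost :: "('s::finite \<Rightarrow> 'a set) \<Rightarrow> ('s \<Rightarrow> 'a \<Rightarrow> real) \<Rightarrow> ('s \<Rightarrow> 'a \<Rightarrow> real) \<Rightarrow> real" where
  "occ_cost A c q = (\<Sum>s\<in>UNIV. \<Sum>a\<in>A s. q s a * c s a)"

end

theory Submission imports Defs "HOL-Analysis.Analysis" begin

locale ssp =
  fixes A :: "'s::finite \<Rightarrow> 'a set"
    and c :: "'s \<Rightarrow> 'a \<Rightarrow> real"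
    and Phat :: "'s \<Rightarrow> 'a \<Rightarrow> 's \<Rightarrow> real"
    and D :: "('s \<Rightarrow> real) \<Rightarrow> ('s \<Rightarrow> real) \<Rightarrow> real"
    and eps :: "'s \<Rightarrow> 'a \<Rightarrow> real"
  assumes fin_A: "\<And>s. finite (A s)"
    and cost: "\<And>s a. a \<in> A s \<Longrightarrow> 0 \<le> c s a \<and> c s a \<le> 1"
    and Phat_nonneg: "\<And>s a s'. a \<in> A s \<Longrightarrow> 0 \<le> Phat s a s'"
    and Phat_sub: "\<And>s a. a \<in> A s \<Longrightarrow> (\<Sum>s'\<in>UNIV. Phat s a s') \<le> 1"
    and D_ok: "divergence_ok D"
    and eps_pos: "\<And>s a. a \<in> A s \<Longrightarrow> 0 < eps s a"
begin

lemma Peps_nonneg: "p \<in> Peps D Phat eps s a \<Longrightarrow> 0 \<le> p s'"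
  by (auto simp: Peps_def subprob_simplex_def)

lemma Peps_le1: "p \<in> Peps D Phat eps s a \<Longrightarrow> p s' \<le> 1"
proof -
  assume p: "p \<in> Peps D Phat eps s a"
  have "p s' \<le> (\<Sum>i\<in>UNIV. p i)"
    by (rule member_le_sum) (auto simp: Peps_nonneg[OF p])
  also have "\<dots> \<le> 1" using p by (auto simp: Peps_def subprob_simplex_def)
  finally show ?thesis .
qed

lemma Phat_in: "a \<in> A s \<Longrightarrow> Phat s a \<in> Peps D Phat eps s a"
  using D_ok Phat_nonneg Phat_sub eps_pos[of a s]
  by (auto simp: Peps_def subprob_simplex_def divergence_ok_def nonneg_vec_def)

lemma Peps_convex:
  assumes a: "a \<in> A s" and p1: "p1 \<in> Peps D Phat eps s a" and p2: "p2 \<in> Peps D Phat eps s a"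
    and m: "0 \<le> \<mu>" "\<mu> \<le> 1"
  shows "(\<lambda>i. \<mu> * p1 i + (1 - \<mu>) * p2 i) \<in> Peps D Phat eps s a"
proof -
  have n1: "nonneg_vec p1" "nonneg_vec p2" "nonneg_vec (Phat s a)"
    using Peps_nonneg[OF p1] Peps_nonneg[OF p2] Phat_nonneg[OF a] by (auto simp: nonneg_vec_def)
  have conv: "D (\<lambda>i. \<mu> * p1 i + (1 - \<mu>) * p2 i) (\<lambda>i. \<mu> * Phat s a i + (1 - \<mu>) * Phat s a i)
      \<le> \<mu> * D p1 (Phat s a) + (1 - \<mu>) * D p2 (Phat s a)"
    using D_ok n1 m unfolding divergence_ok_def by blast
  have e: "(\<lambda>i. \<mu> * Phat s a i + (1 - \<mu>) * Phat s a i) = Phat s a"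
    by (rule ext) (simp add: algebra_simps)
  have d1: "D p1 (Phat s a) \<le> eps s a" "D p2 (Phat s a) \<le> eps s a"
    using p1 p2 by (auto simp: Peps_def)
  have "\<mu> * D p1 (Phat s a) + (1 - \<mu>) * D p2 (Phat s a) \<le> \<mu> * eps s a + (1 - \<mu>) * eps s a"
    using d1 m by (intro add_mono mult_left_mono) auto
  then have dd: "D (\<lambda>i. \<mu> * p1 i + (1 - \<mu>) * p2 i) (Phat s a) \<le> eps s a"
    using conv e by (simp add: algebra_simps)
  have nn: "\<forall>i. 0 \<le> \<mu> * p1 i + (1 - \<mu>) * p2 i"
    using n1 m by (auto simp: nonneg_vec_def)
  have "(\<Sum>i\<in>UNIV. \<mu> * p1 i + (1 - \<mu>) * p2 i) = \<mu> * (\<Sum>i\<in>UNIV. p1 i) + (1 - \<mu>) * (\<Sum>i\<in>UNIV. p2 i)"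
    by (simp add: sum.distrib sum_distrib_left)
  also have "\<dots> \<le> \<mu> * 1 + (1 - \<mu>) * 1"
    using p1 p2 m by (intro add_mono mult_left_mono) (auto simp: Peps_def subprob_simplex_def)
  finally have "(\<Sum>i\<in>UNIV. \<mu> * p1 i + (1 - \<mu>) * p2 i) \<le> 1" by simp
  then show ?thesis using dd nn by (auto simp: Peps_def subprob_simplex_def)
qed

lemma disposal:
  assumes q: "\<forall>s. \<forall>a\<in>A s. 0 \<le> q s a \<and> P s a \<in> Peps D Phat eps s a"
    and bal: "\<forall>s. (\<Sum>a\<in>A s. q s a) = b s + (\<Sum>s'\<in>UNIV. \<Sum>a\<in>A s'. q s' a * P s' a s)"
    and b': "\<forall>s. 0 \<le> b' s \<and> b' s \<le> b s"
  shows "\<exists>q'. (\<forall>s. \<forall>a\<in>A s. 0 \<le> q' s a \<and> q' s a \<le> q s a) \<and>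
     (\<forall>s. (\<Sum>a\<in>A s. q' s a) = b' s + (\<Sum>s'\<in>UNIV. \<Sum>a\<in>A s'. q' s' a * P s' a s))"
proof -
  define Q where "Q s = (\<Sum>a\<in>A s. q s a)" for s
  define \<pi> where "\<pi> s a = q s a / Q s" for s a
  have Qnn: "0 \<le> Q s" for s unfolding Q_def using q by (auto intro: sum_nonneg)
  have pinn: "a \<in> A s \<Longrightarrow> 0 \<le> \<pi> s a" for s a using q Qnn[of s] by (auto simp: \<pi>_def)
  have Pnn: "a \<in> A s \<Longrightarrow> 0 \<le> P s a s'" for s a s' using q Peps_nonneg by blast
  have qeq: "a \<in> A s \<Longrightarrow> q s a = Q s * \<pi> s a" for s a
  proof (cases "Q s = 0")
    case True
    assume a: "a \<in> A s"
    have "q s a = 0" using True q fin_A[of s] a unfolding Q_def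
      by (simp add: sum_nonneg_eq_0_iff)
    then show ?thesis using True by simp
  qed (simp add: \<pi>_def)
  have sumpi: "Q s \<noteq> 0 \<Longrightarrow> (\<Sum>a\<in>A s. \<pi> s a) = 1" for s
    by (simp add: \<pi>_def Q_def sum_divide_distrib[symmetric])
  define F where "F Y s = b' s + (\<Sum>s'\<in>UNIV. \<Sum>a\<in>A s'. Y s' * \<pi> s' a * P s' a s)" for Y s
  have mono: "(\<And>s. Y1 s \<le> Y2 s) \<Longrightarrow> F Y1 s \<le> F Y2 s" for Y1 Y2 s
    unfolding F_def using pinn Pnn
    by (intro add_left_mono sum_mono mult_right_mono) auto
  have FQ: "F Q s \<le> Q s" for s
  proof -
    have "F Q s = b' s + (\<Sum>s'\<in>UNIV. \<Sum>a\<in>A s'. q s' a * P s' a s)"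
      unfolding F_def by (intro arg_cong2[where f="(+)"] refl sum.cong) (auto simp: qeq)
    also have "\<dots> \<le> b s + (\<Sum>s'\<in>UNIV. \<Sum>a\<in>A s'. q s' a * P s' a s)" using b' by simp
    also have "\<dots> = Q s" using bal by (simp add: Q_def)
    finally show ?thesis .
  qed
  have Fnn: "(\<And>s. 0 \<le> Y s) \<Longrightarrow> 0 \<le> F Y s" for Y s
    unfolding F_def using b' pinn Pnn
    by (intro add_nonneg_nonneg sum_nonneg mult_nonneg_nonneg) auto
  define S where "S = {Y. (\<forall>s. 0 \<le> Y s \<and> Y s \<le> Q s) \<and> (\<forall>s. F Y s \<le> Y s)}"
  have QS: "Q \<in> S" unfolding S_def using Qnn FQ by auto
  define Y where "Y s = Inf ((\<lambda>Z. Z s) ` S)" for s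
  have bdd: "bdd_below ((\<lambda>Z. Z s) ` S)" for s
    by (rule bdd_belowI[where m=0]) (auto simp: S_def)
  have Ylow: "Z \<in> S \<Longrightarrow> Y s \<le> Z s" for Z s
    unfolding Y_def by (rule cInf_lower) (use bdd in auto)
  have Ynn: "0 \<le> Y s" for s
    unfolding Y_def using QS by (intro cInf_greatest) (auto simp: S_def)
  have YQ: "Y s \<le> Q s" for s using Ylow[OF QS] .
  have FY: "F Y s \<le> Y s" for s
    unfolding Y_def[of s] using QS
  proof (intro cInf_greatest)
    fix v assume "v \<in> (\<lambda>Z. Z s) ` S"
    then obtain Z where Z: "Z \<in> S" "v = Z s" by auto
    have "F Y s \<le> F Z s" by (rule mono) (rule Ylow[OF Z(1)])
    also have "\<dots> \<le> Z s" using Z(1) by (auto simp: S_def)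
    finally show "F Y s \<le> v" using Z by simp
  qed auto
  have "F Y \<in> S" unfolding S_def
  proof (intro CollectI conjI allI)
    fix s
    show "0 \<le> F Y s" using Fnn[of Y s] Ynn by blast
    show "F Y s \<le> Q s" using FY[of s] YQ[of s] by linarith
    show "F (F Y) s \<le> F Y s" by (rule mono) (rule FY)
  qed
  then have YF: "Y s = F Y s" for s using Ylow FY by (meson antisym)
  define q' where "q' s a = Y s * \<pi> s a" for s a
  have sumq': "(\<Sum>a\<in>A s. q' s a) = Y s" for s
  proof (cases "Q s = 0")
    case True
    then have "Y s = 0" using Ynn[of s] YQ[of s] by simp
    then show ?thesis by (simp add: q'_def)
  next
    case False
    then show ?thesis by (simp add: q'_def sum_distrib_left[symmetric] sumpi)
  qed
  show ?thesis
  proof (intro exI conjI allI ballI)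
    fix s a assume a: "a \<in> A s"
    show "0 \<le> q' s a" unfolding q'_def using Ynn pinn[OF a] by simp
    show "q' s a \<le> q s a" unfolding q'_def qeq[OF a]
      using YQ pinn[OF a] by (simp add: mult_right_mono)
  next
    fix s
    show "(\<Sum>a\<in>A s. q' s a) = b' s + (\<Sum>s'\<in>UNIV. \<Sum>a\<in>A s'. q' s' a * P s' a s)"
      unfolding sumq' using YF[of s] by (simp add: F_def q'_def)
  qed
qed


definition M :: "(real \<times> (real^'s)) set" where
  "M = {(t, b). \<exists>q P. (\<forall>s. \<forall>a\<in>A s. 0 \<le> q s a \<and> P s a \<in> Peps D Phat eps s a) \<and>
      occ_cost A c q \<le> t \<and>
      (\<forall>s. b$s = (\<Sum>a\<in>A s. q s a) - (\<Sum>s'\<in>UNIV. \<Sum>a\<in>A s'. q s' a * P s' a s))}"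

lemma M_memI: "(\<forall>s. \<forall>a\<in>A s. 0 \<le> q s a \<and> P s a \<in> Peps D Phat eps s a) \<Longrightarrow> occ_cost A c q \<le> t \<Longrightarrow>
   (\<forall>s. b$s = (\<Sum>a\<in>A s. q s a) - (\<Sum>s'\<in>UNIV. \<Sum>a\<in>A s'. q s' a * P s' a s)) \<Longrightarrow> (t, b) \<in> M"
  unfolding M_def by blast

lemma occ_lin: "occ_cost A c (\<lambda>s a. u * q1 s a + v * q2 s a) = u * occ_cost A c q1 + v * occ_cost A c q2"
  by (simp add: occ_cost_def sum.distrib sum_distrib_left algebra_simps)

lemma M_convex: "convex M"
  unfolding convex_def
proof (intro ballI allI impI)
  fix m1 m2 :: "real \<times> (real^'s)" and u v :: real
  assume m1: "m1 \<in> M" and m2: "m2 \<in> M" and uv: "0 \<le> u" "0 \<le> v" "u + v = 1"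
  obtain t1 b1 where m1e: "m1 = (t1, b1)" by (cases m1)
  obtain t2 b2 where m2e: "m2 = (t2, b2)" by (cases m2)
  obtain q1 P1 where h1: "\<forall>s. \<forall>a\<in>A s. 0 \<le> q1 s a \<and> P1 s a \<in> Peps D Phat eps s a"
    "occ_cost A c q1 \<le> t1"
    "\<forall>s. b1$s = (\<Sum>a\<in>A s. q1 s a) - (\<Sum>s'\<in>UNIV. \<Sum>a\<in>A s'. q1 s' a * P1 s' a s)"
    using m1 unfolding m1e M_def by blast
  obtain q2 P2 where h2: "\<forall>s. \<forall>a\<in>A s. 0 \<le> q2 s a \<and> P2 s a \<in> Peps D Phat eps s a"
    "occ_cost A c q2 \<le> t2"
    "\<forall>s. b2$s = (\<Sum>a\<in>A s. q2 s a) - (\<Sum>s'\<in>UNIV. \<Sum>a\<in>A s'. q2 s' a * P2 s' a s)"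
    using m2 unfolding m2e M_def by blast
  define q where "q s a = u * q1 s a + v * q2 s a" for s a
  define P where "P s a = (if q s a = 0 then Phat s a else
      (\<lambda>i. (u * q1 s a / q s a) * P1 s a i + (1 - u * q1 s a / q s a) * P2 s a i))" for s a
  have key: "q s a * P s a i = u * q1 s a * P1 s a i + v * q2 s a * P2 s a i" if a: "a \<in> A s" for s a i
  proof (cases "q s a = 0")
    case True
    have z: "u * q1 s a = 0" "v * q2 s a = 0"
      using True h1(1) h2(1) a uv unfolding q_def
      by (smt (verit) mult_nonneg_nonneg)+
    have z2: "u * q1 s a * P1 s a i = 0" "v * q2 s a * P2 s a i = 0" using z by simp_all
    show ?thesis by (simp only: True z2 mult_zero_left add_0)
  next
    case False
    have vq: "v * q2 s a * P2 s a i = (q s a - u * q1 s a) * P2 s a i" by (simp add: q_def)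
    have "q s a * P s a i = u * q1 s a * P1 s a i + (q s a - u * q1 s a) * P2 s a i"
      using False by (simp add: P_def field_simps)
    then show ?thesis using vq by linarith
  qed
  have Pin: "P s a \<in> Peps D Phat eps s a" if a: "a \<in> A s" for s a
  proof (cases "q s a = 0")
    case True
    then show ?thesis using Phat_in[OF a] by (simp add: P_def)
  next
    case False
    have nn: "0 \<le> u * q1 s a" "0 \<le> v * q2 s a" using h1(1) h2(1) a uv by auto
    then have qp: "0 < q s a" using False unfolding q_def by linarith
    have "u * q1 s a / q s a \<le> 1" using nn qp by (simp add: q_def)
    moreover have "0 \<le> u * q1 s a / q s a" using nn qp by simp
    ultimately have "(\<lambda>i. (u * q1 s a / q s a) * P1 s a i + (1 - u * q1 s a / q s a) * P2 s a i)
       \<in> Peps D Phat eps s a"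
      using Peps_convex[OF a, of "P1 s a" "P2 s a"] h1(1) h2(1) a by blast
    then show ?thesis using False unfolding P_def by simp
  qed
  show "u *\<^sub>R m1 + v *\<^sub>R m2 \<in> M"
    unfolding m1e m2e M_def
  proof (simp, intro exI conjI allI ballI)
    fix s a assume a: "a \<in> A s"
    show "0 \<le> q s a" using h1(1) h2(1) a uv by (simp add: q_def)
    show "P s a \<in> Peps D Phat eps s a" by (rule Pin[OF a])
  next
    have "occ_cost A c q = u * occ_cost A c q1 + v * occ_cost A c q2"
      unfolding q_def by (rule occ_lin)
    also have "\<dots> \<le> u * t1 + v * t2" using h1(2) h2(2) uv by (intro add_mono mult_left_mono) auto
    finally show "occ_cost A c q \<le> u * t1 + v * t2" .
  next
    fix s
    have "(\<Sum>s'\<in>UNIV. \<Sum>a\<in>A s'. q s' a * P s' a s) =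
        (\<Sum>s'\<in>UNIV. \<Sum>a\<in>A s'. u * q1 s' a * P1 s' a s + v * q2 s' a * P2 s' a s)"
      by (intro sum.cong refl) (simp add: key)
    also have "\<dots> = u * (\<Sum>s'\<in>UNIV. \<Sum>a\<in>A s'. q1 s' a * P1 s' a s) + v * (\<Sum>s'\<in>UNIV. \<Sum>a\<in>A s'. q2 s' a * P2 s' a s)"
      by (simp add: sum.distrib sum_distrib_left mult.assoc)
    moreover have "(\<Sum>a\<in>A s. q s a) = u * (\<Sum>a\<in>A s. q1 s a) + v * (\<Sum>a\<in>A s. q2 s a)"
      by (simp add: q_def sum.distrib sum_distrib_left)
    ultimately show "u * b1 $ s + v * b2 $ s = (\<Sum>a\<in>A s. q s a) - (\<Sum>s'\<in>UNIV. \<Sum>a\<in>A s'. q s' a * P s' a s)"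
      unfolding h1(3)[rule_format, of s] h2(3)[rule_format, of s] by (simp add: algebra_simps)
  qed
qed

lemma M_cone: assumes "m \<in> M" "0 \<le> l" shows "l *\<^sub>R m \<in> M"
proof -
  obtain t b where me: "m = (t, b)" by (cases m)
  obtain q P where h: "\<forall>s. \<forall>a\<in>A s. 0 \<le> q s a \<and> P s a \<in> Peps D Phat eps s a"
    "occ_cost A c q \<le> t"
    "\<forall>s. b$s = (\<Sum>a\<in>A s. q s a) - (\<Sum>s'\<in>UNIV. \<Sum>a\<in>A s'. q s' a * P s' a s)"
    using assms(1) unfolding me M_def by blast
  have oc: "occ_cost A c (\<lambda>s a. l * q s a) = l * occ_cost A c q"
    by (simp add: occ_cost_def sum_distrib_left algebra_simps)
  show ?thesis unfolding me M_def
  proof (simp, intro exI[of _ "\<lambda>s a. l * q s a"] exI[of _ P] conjI allI ballI)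
    fix s a assume "a \<in> A s" then show "0 \<le> l * q s a" "P s a \<in> Peps D Phat eps s a"
      using h(1) assms(2) by auto
  next
    show "occ_cost A c (\<lambda>s a. l * q s a) \<le> l * t" using oc h(2) assms(2) by (simp add: mult_left_mono)
  next
    fix s show "l * b $ s = (\<Sum>a\<in>A s. l * q s a) - (\<Sum>s'\<in>UNIV. \<Sum>a\<in>A s'. l * q s' a * P s' a s)"
      using h(3) by (simp add: sum_distrib_left[symmetric] right_diff_distrib mult.assoc)
  qed
qed


lemma occ_nonneg: "\<forall>s. \<forall>a\<in>A s. 0 \<le> q s a \<Longrightarrow> 0 \<le> occ_cost A c q"
  unfolding occ_cost_def using cost by (auto intro!: sum_nonneg mult_nonneg_nonneg)

lemma occ_mono: "\<forall>s. \<forall>a\<in>A s. q1 s a \<le> q2 s a \<Longrightarrow> occ_cost A c q1 \<le> occ_cost A c q2"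
  unfolding occ_cost_def using cost by (auto intro!: sum_mono mult_right_mono)

lemma CBmin_le:
  assumes a: "a \<in> A s" and p: "p \<in> Peps D Phat eps s a"
  shows "CBmin D Phat eps s a x \<le> (\<Sum>s'\<in>UNIV. (p s' - Phat s a s') * x s')"
  unfolding CBmin_def
proof (rule cInf_lower)
  show "(\<Sum>s'\<in>UNIV. (p s' - Phat s a s') * x s') \<in> (\<lambda>p. \<Sum>s'\<in>UNIV. (p s' - Phat s a s') * x s') ` Peps D Phat eps s a"
    using p by blast
  show "bdd_below ((\<lambda>p. \<Sum>s'\<in>UNIV. (p s' - Phat s a s') * x s') ` Peps D Phat eps s a)"
  proof (rule bdd_belowI[where m="- (\<Sum>s'\<in>UNIV. (1 + \<bar>Phat s a s'\<bar>) * \<bar>x s'\<bar>)"])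
    fix v assume "v \<in> (\<lambda>p. \<Sum>s'\<in>UNIV. (p s' - Phat s a s') * x s') ` Peps D Phat eps s a"
    then obtain p' where p': "p' \<in> Peps D Phat eps s a" "v = (\<Sum>s'\<in>UNIV. (p' s' - Phat s a s') * x s')" by auto
    have "- ((1 + \<bar>Phat s a s'\<bar>) * \<bar>x s'\<bar>) \<le> (p' s' - Phat s a s') * x s'" for s'
    proof -
      have "\<bar>p' s' - Phat s a s'\<bar> \<le> 1 + \<bar>Phat s a s'\<bar>"
        using Peps_nonneg[OF p'(1), of s'] Peps_le1[OF p'(1), of s'] by linarith
      then have "\<bar>(p' s' - Phat s a s') * x s'\<bar> \<le> (1 + \<bar>Phat s a s'\<bar>) * \<bar>x s'\<bar>"
        unfolding abs_mult by (rule mult_right_mono) simp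
      then show ?thesis by linarith
    qed
    then have "(\<Sum>s'\<in>UNIV. - ((1 + \<bar>Phat s a s'\<bar>) * \<bar>x s'\<bar>)) \<le> v"
      unfolding p'(2) by (rule sum_mono)
    then show "- (\<Sum>s'\<in>UNIV. (1 + \<bar>Phat s a s'\<bar>) * \<bar>x s'\<bar>) \<le> v" by (simp add: sum_negf)
  qed
qed

lemma CBmin_ge:
  assumes a: "a \<in> A s" and h: "\<And>p. p \<in> Peps D Phat eps s a \<Longrightarrow> v \<le> (\<Sum>s'\<in>UNIV. (p s' - Phat s a s') * x s')"
  shows "v \<le> CBmin D Phat eps s a x"
  unfolding CBmin_def using Phat_in[OF a] h by (intro cInf_greatest) auto

lemma weak:
  assumes x: "x \<in> feasA A c D Phat eps" and qP: "(q, P) \<in> feasB A D Phat eps"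
  shows "(\<Sum>s\<in>UNIV. x s) \<le> occ_cost A c q"
proof -
  have qn: "\<forall>s. \<forall>a\<in>A s. 0 \<le> q s a \<and> P s a \<in> Peps D Phat eps s a"
    and bal: "\<forall>s. (\<Sum>a\<in>A s. q s a) = 1 + (\<Sum>s'\<in>UNIV. \<Sum>a\<in>A s'. q s' a * P s' a s)"
    using qP by (auto simp: feasB_def)
  have xs: "x s \<le> c s a + (\<Sum>s'\<in>UNIV. P s a s' * x s')" if a: "a \<in> A s" for s a
  proof -
    have "x s \<le> c s a + (\<Sum>s'\<in>UNIV. Phat s a s' * x s') + CBmin D Phat eps s a x"
      using x a by (auto simp: feasA_def)
    also have "\<dots> \<le> c s a + (\<Sum>s'\<in>UNIV. Phat s a s' * x s') + (\<Sum>s'\<in>UNIV. (P s a s' - Phat s a s') * x s')"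
      using CBmin_le[OF a, of "P s a" x] qn a by simp
    also have "\<dots> = c s a + (\<Sum>s'\<in>UNIV. P s a s' * x s')"
      by (simp add: left_diff_distrib sum_subtractf)
    finally show ?thesis .
  qed
  have swap: "(\<Sum>s\<in>UNIV. \<Sum>s'\<in>UNIV. \<Sum>a\<in>A s'. g s' a s) = (\<Sum>s'\<in>UNIV. \<Sum>a\<in>A s'. \<Sum>s\<in>UNIV. g s' a s)"
    for g :: "'s \<Rightarrow> 'a \<Rightarrow> 's \<Rightarrow> real"
  proof -
    have "(\<Sum>s\<in>UNIV. \<Sum>s'\<in>UNIV. \<Sum>a\<in>A s'. g s' a s) = (\<Sum>s'\<in>UNIV. \<Sum>s\<in>UNIV. \<Sum>a\<in>A s'. g s' a s)"
      by (rule sum.swap)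
    also have "\<dots> = (\<Sum>s'\<in>UNIV. \<Sum>a\<in>A s'. \<Sum>s\<in>UNIV. g s' a s)"
      by (rule sum.cong[OF refl], rule sum.swap)
    finally show ?thesis .
  qed
  have "(\<Sum>s\<in>UNIV. (\<Sum>a\<in>A s. q s a) * x s) \<le> (\<Sum>s\<in>UNIV. \<Sum>a\<in>A s. q s a * (c s a + (\<Sum>s'\<in>UNIV. P s a s' * x s')))"
    unfolding sum_distrib_right using qn xs by (intro sum_mono mult_left_mono) auto
  also have "\<dots> = occ_cost A c q + (\<Sum>s\<in>UNIV. \<Sum>a\<in>A s. \<Sum>s'\<in>UNIV. q s a * P s a s' * x s')"
    by (simp add: occ_cost_def distrib_left sum.distrib sum_distrib_left mult.assoc)
  finally have 1: "(\<Sum>s\<in>UNIV. (\<Sum>a\<in>A s. q s a) * x s) \<le> occ_cost A c q + (\<Sum>s\<in>UNIV. \<Sum>a\<in>A s. \<Sum>s'\<in>UNIV. q s a * P s a s' * x s')" .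
  have "(\<Sum>s\<in>UNIV. (\<Sum>a\<in>A s. q s a) * x s) = (\<Sum>s\<in>UNIV. (1 + (\<Sum>s'\<in>UNIV. \<Sum>a\<in>A s'. q s' a * P s' a s)) * x s)"
    using bal by simp
  also have "\<dots> = (\<Sum>s\<in>UNIV. x s) + (\<Sum>s\<in>UNIV. \<Sum>s'\<in>UNIV. \<Sum>a\<in>A s'. q s' a * P s' a s * x s)"
    by (simp add: distrib_right sum.distrib sum_distrib_right)
  also have "\<dots> = (\<Sum>s\<in>UNIV. x s) + (\<Sum>s\<in>UNIV. \<Sum>a\<in>A s. \<Sum>s'\<in>UNIV. q s a * P s a s' * x s')"
    by (simp only: swap)
  finally show ?thesis using 1 by simp
qed

lemma ind_sum1:
  assumes a: "a \<in> A s"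
  shows "(\<Sum>a'\<in>A s'. (if s' = s \<and> a' = a then 1 else 0) * f a') = (if s' = s then f a else (0::real))"
proof (cases "s' = s")
  case True
  have "(\<Sum>a'\<in>A s'. (if s' = s \<and> a' = a then 1 else 0) * f a') = (\<Sum>a'\<in>A s. (if a' = a then f a' else 0))"
    using True by (intro sum.cong) auto
  also have "\<dots> = f a" using a fin_A[of s] by (simp add: sum.delta')
  finally show ?thesis using True by simp
qed simp

lemma ind_sum:
  assumes a: "a \<in> A s"
  shows "(\<Sum>s'\<in>UNIV. \<Sum>a'\<in>A s'. (if s' = s \<and> a' = a then 1 else 0) * f s' a') = (f s a :: real)"
proof -
  have "(\<Sum>s'\<in>UNIV. \<Sum>a'\<in>A s'. (if s' = s \<and> a' = a then 1 else 0) * f s' a') = (\<Sum>s'\<in>UNIV. if s' = s then f s a else 0)"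
    by (intro sum.cong refl) (use ind_sum1[OF a, of _ "f _"] in auto)
  also have "\<dots> = f s a" by simp
  finally show ?thesis .
qed


lemma strong:
  assumes q0: "\<forall>s. \<forall>a\<in>A s. 0 \<le> q0 s a"
      "\<forall>s. (\<Sum>a\<in>A s. q0 s a) = 1 + (\<Sum>s'\<in>UNIV. \<Sum>a\<in>A s'. q0 s' a * Phat s' a s)"
    and rlt: "ereal r < (INF qP\<in>feasB A D Phat eps. ereal (occ_cost A c (fst qP)))"
  shows "\<exists>x\<in>feasA A c D Phat eps. r < (\<Sum>s\<in>UNIV. x s)"
proof -
  let ?I = "INF qP\<in>feasB A D Phat eps. ereal (occ_cost A c (fst qP))"
  have q0B: "(q0, Phat) \<in> feasB A D Phat eps" using q0 Phat_in unfolding feasB_def by auto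
  have I0: "0 \<le> ?I"
    by (rule INF_greatest) (auto simp: feasB_def intro!: occ_nonneg)
  have Iup: "?I \<le> ereal (occ_cost A c q0)"
    using INF_lower[OF q0B, of "\<lambda>qP. ereal (occ_cost A c (fst qP))"] by simp
  obtain V where IV: "?I = ereal V" using I0 Iup by (cases ?I) auto
  have V0: "0 \<le> V" using I0 IV by simp
  have rV: "r < V" using rlt IV by simp
  have Vle: "V \<le> occ_cost A c q" if "(q, P) \<in> feasB A D Phat eps" for q P
    using INF_lower[OF that, of "\<lambda>qP. ereal (occ_cost A c (fst qP))"] IV by simp
  define one :: "real^'s" where "one = (\<chi> s. 1)"
  define z where "z = (r, one)"
  have znot: "z \<notin> closure M"
  proof
    assume "z \<in> closure M"
    define \<eta> where "\<eta> = min (1/2) ((V - r) / (2 * (1 + V)))"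
    have \<eta>0: "0 < \<eta>" using rV V0 by (simp add: \<eta>_def)
    have \<eta>h: "\<eta> \<le> 1/2" unfolding \<eta>_def by (rule min.cobounded1)
    have "\<eta> * (1 + V) \<le> (V - r) / 2"
    proof -
      have "\<eta> \<le> (V - r) / (2 * (1 + V))" unfolding \<eta>_def by (rule min.cobounded2)
      then have "\<eta> * (1 + V) \<le> (V - r) / (2 * (1 + V)) * (1 + V)"
        using V0 by (intro mult_right_mono) auto
      also have "\<dots> = (V - r) / 2" using V0 by (simp add: field_simps)
      finally show ?thesis .
    qed
    moreover have "(V - r) / 2 < V - r" using rV by simp
    ultimately have \<eta>V: "\<eta> * (1 + V) < V - r" by (rule le_less_trans)
    obtain m where m: "m \<in> M" "dist m z < \<eta>" using \<open>z \<in> closure M\<close> \<eta>0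
      unfolding closure_approachable by blast
    obtain t b where me: "m = (t, b)" by (cases m)
    have "dist t r < \<eta>" using dist_fst_le[of m z] m(2) me z_def by simp
    then have tr: "t < r + \<eta>" by (simp add: dist_real_def abs_less_iff)
    have bs: "1 - \<eta> \<le> b$s" for s
    proof -
      have "\<bar>(b - one)$s\<bar> \<le> norm (b - one)" by (rule component_le_norm_cart)
      also have "\<dots> = dist b one" by (simp add: dist_norm)
      also have "\<dots> \<le> dist m z" using dist_snd_le[of m z] me z_def by simp
      finally have "\<bar>b$s - 1\<bar> < \<eta>" using m(2) by (simp add: one_def)
      then show ?thesis by linarith
    qed
    obtain q P where h: "\<forall>s. \<forall>a\<in>A s. 0 \<le> q s a \<and> P s a \<in> Peps D Phat eps s a"
      "occ_cost A c q \<le> t"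
      "\<forall>s. b$s = (\<Sum>a\<in>A s. q s a) - (\<Sum>s'\<in>UNIV. \<Sum>a\<in>A s'. q s' a * P s' a s)"
      using m(1) unfolding me M_def by blast
    define k where "k = 1 / (1 - \<eta>)"
    have k0: "0 < k" using \<eta>h by (simp add: k_def)
    have k1: "k * (1 - \<eta>) = 1" using \<eta>h by (simp add: k_def)
    have "\<exists>q'. (\<forall>s. \<forall>a\<in>A s. 0 \<le> q' s a \<and> q' s a \<le> k * q s a) \<and>
     (\<forall>s. (\<Sum>a\<in>A s. q' s a) = 1 + (\<Sum>s'\<in>UNIV. \<Sum>a\<in>A s'. q' s' a * P s' a s))"
    proof (rule disposal[where b="\<lambda>s. k * b$s"])
      show "\<forall>s. \<forall>a\<in>A s. 0 \<le> k * q s a \<and> P s a \<in> Peps D Phat eps s a" using h(1) k0 by auto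
      show "\<forall>s. (\<Sum>a\<in>A s. k * q s a) = k * b $ s + (\<Sum>s'\<in>UNIV. \<Sum>a\<in>A s'. k * q s' a * P s' a s)"
      proof
        fix s
        have "(\<Sum>a\<in>A s. q s a) = b $ s + (\<Sum>s'\<in>UNIV. \<Sum>a\<in>A s'. q s' a * P s' a s)"
          using h(3) by simp
        then have "k * (\<Sum>a\<in>A s. q s a) = k * b $ s + k * (\<Sum>s'\<in>UNIV. \<Sum>a\<in>A s'. q s' a * P s' a s)"
          by (simp add: distrib_left)
        then show "(\<Sum>a\<in>A s. k * q s a) = k * b $ s + (\<Sum>s'\<in>UNIV. \<Sum>a\<in>A s'. k * q s' a * P s' a s)"
          by (simp add: sum_distrib_left mult.assoc)
      qed
      show "\<forall>s. 0 \<le> (1::real) \<and> 1 \<le> k * b $ s"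
      proof
        fix s
        have "k * (1 - \<eta>) \<le> k * b$s" using bs[of s] k0 by (intro mult_left_mono) auto
        then show "0 \<le> (1::real) \<and> 1 \<le> k * b $ s" using k1 by simp
      qed
    qed
    then obtain q' where q': "\<forall>s. \<forall>a\<in>A s. 0 \<le> q' s a \<and> q' s a \<le> k * q s a"
      "\<forall>s. (\<Sum>a\<in>A s. q' s a) = 1 + (\<Sum>s'\<in>UNIV. \<Sum>a\<in>A s'. q' s' a * P s' a s)" by blast
    have "(q', P) \<in> feasB A D Phat eps" using q' h(1) by (auto simp: feasB_def)
    then have "V \<le> occ_cost A c q'" by (rule Vle)
    also have "\<dots> \<le> occ_cost A c (\<lambda>s a. k * q s a)" using q'(1) by (intro occ_mono) auto
    also have "\<dots> = k * occ_cost A c q" by (simp add: occ_cost_def sum_distrib_left algebra_simps)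
    also have "\<dots> \<le> k * t" using h(2) k0 by simp
    also have "\<dots> < k * (r + \<eta>)" using tr k0 by simp
    also have "\<dots> < k * (V * (1 - \<eta>))" using \<eta>V k0 by (intro mult_strict_left_mono) (auto simp: algebra_simps)
    also have "\<dots> = V * (k * (1 - \<eta>))" by (simp only: mult.commute mult.left_commute)
    also have "\<dots> = V" using k1 by simp
    finally show False by simp
  qed
  obtain av \<beta> where sep: "inner av z < \<beta>" "\<forall>x\<in>closure M. \<beta> < inner av x"
    using separating_hyperplane_closed_point[OF convex_closure[OF M_convex] closed_closure znot] by blast
  have sepM: "m \<in> M \<Longrightarrow> \<beta> < inner av m" for m using sep(2) closure_subset by blast
  have Mzero: "(0, 0) \<in> M" unfolding M_def
    by (auto intro!: exI[of _ "\<lambda>s a. 0"] exI[of _ Phat] simp: occ_cost_def Phat_in)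
  have \<beta>0: "\<beta> < 0" using sepM[OF Mzero] by (simp add: inner_Pair_0)
  have Mnn: "0 \<le> inner av m" if mM: "m \<in> M" for m
  proof (rule ccontr)
    assume "\<not> 0 \<le> inner av m"
    then have neg: "inner av m < 0" by simp
    define l where "l = \<beta> / inner av m"
    have l0: "0 < l" using neg \<beta>0 by (simp add: l_def divide_neg_neg)
    have "\<beta> < inner av (l *\<^sub>R m)" using sepM[OF M_cone[OF mM, of l]] l0 by simp
    also have "\<dots> = \<beta>" using neg by (simp add: l_def)
    finally show False by simp
  qed
  obtain \<alpha> w where ae: "av = (\<alpha>, w)" by (cases av)
  have M10: "(1, 0) \<in> M" unfolding M_def
    by (auto intro!: exI[of _ "\<lambda>s a. 0"] exI[of _ Phat] simp: occ_cost_def Phat_in)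
  have \<alpha>0: "0 \<le> \<alpha>" using Mnn[OF M10] ae by simp
  have inner_one: "inner w one = (\<Sum>s\<in>UNIV. w$s)" by (simp add: inner_vec_def one_def)
  have Mq0: "(occ_cost A c q0, one) \<in> M" unfolding M_def
  proof (simp, intro exI[of _ q0] exI[of _ Phat] conjI allI ballI)
    fix s a assume "a \<in> A s" then show "0 \<le> q0 s a" "Phat s a \<in> Peps D Phat eps s a"
      using q0(1) Phat_in by auto
  next
    fix s show "one $ s = (\<Sum>a\<in>A s. q0 s a) - (\<Sum>s'\<in>UNIV. \<Sum>a\<in>A s'. q0 s' a * Phat s' a s)"
      using q0(2) by (simp add: one_def)
  qed simp
  have 1: "0 \<le> \<alpha> * occ_cost A c q0 + (\<Sum>s\<in>UNIV. w$s)" using Mnn[OF Mq0] ae inner_one by simp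
  have 2: "\<alpha> * r + (\<Sum>s\<in>UNIV. w$s) < 0" using sep(1) \<beta>0 ae inner_one z_def by simp
  have \<alpha>p: "0 < \<alpha>"
  proof (rule ccontr)
    assume "\<not> 0 < \<alpha>" then have "\<alpha> = 0" using \<alpha>0 by simp
    then show False using 1 2 by simp
  qed
  define x where "x s = - (w$s) / \<alpha>" for s
  have sumx: "(\<Sum>s\<in>UNIV. x s) = - (\<Sum>s\<in>UNIV. w$s) / \<alpha>"
    by (simp add: x_def sum_divide_distrib sum_negf)
  have rx: "r < (\<Sum>s\<in>UNIV. x s)" unfolding sumx using 2 \<alpha>p by (simp add: field_simps)
  have xin: "x \<in> feasA A c D Phat eps" unfolding feasA_def
  proof (intro CollectI allI ballI)
    fix s a assume a: "a \<in> A s"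
    have key: "x s \<le> c s a + (\<Sum>s'\<in>UNIV. p s' * x s')" if p: "p \<in> Peps D Phat eps s a" for p
    proof -
      define e where "e = (\<lambda>s' a'. if s' = s \<and> a' = a then 1 else (0::real))"
      define P' where "P' = (\<lambda>s' a'. if s' = s \<and> a' = a then p else Phat s' a')"
      have mem: "(c s a, \<chi> s''. (if s'' = s then 1 else 0) - p s'') \<in> M"
      proof (rule M_memI[of e P'], safe)
        fix s' a' assume "a' \<in> A s'"
        then show "0 \<le> e s' a'" "P' s' a' \<in> Peps D Phat eps s' a'"
          using p Phat_in by (auto simp: e_def P'_def)
      next
        show "occ_cost A c e \<le> c s a" unfolding occ_cost_def e_def using ind_sum[OF a, of c] by simp
      next
        fix s''
        have "(\<Sum>a'\<in>A s''. e s'' a') = (\<Sum>a'\<in>A s''. e s'' a' * 1)" by simp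
        also have "\<dots> = (if s'' = s then 1 else 0)" unfolding e_def by (rule ind_sum1[OF a])
        finally have e1: "(\<Sum>a'\<in>A s''. e s'' a') = (if s'' = s then 1 else 0)" .
        have e2: "(\<Sum>s'\<in>UNIV. \<Sum>a'\<in>A s'. e s' a' * P' s' a' s'') = P' s a s''"
          unfolding e_def by (rule ind_sum[OF a])
        show "(\<chi> s''. (if s'' = s then 1 else 0) - p s'') $ s'' = (\<Sum>a'\<in>A s''. e s'' a') - (\<Sum>s'\<in>UNIV. \<Sum>a'\<in>A s'. e s' a' * P' s' a' s'')"
          unfolding e1 e2 by (simp add: P'_def)
      qed
      have "0 \<le> \<alpha> * c s a + (\<Sum>s''\<in>UNIV. w$s'' * ((if s'' = s then 1 else 0) - p s''))"
        using Mnn[OF mem] ae by (simp add: inner_vec_def)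
      also have "\<dots> = \<alpha> * c s a + w$s - (\<Sum>s''\<in>UNIV. w$s'' * p s'')"
      proof -
        have "(\<Sum>s''\<in>UNIV. w$s'' * ((if s'' = s then 1 else 0) - p s'')) =
           (\<Sum>s''\<in>UNIV. w$s'' * (if s'' = s then 1 else 0)) - (\<Sum>s''\<in>UNIV. w$s'' * p s'')"
          by (simp only: right_diff_distrib sum_subtractf)
        also have "(\<Sum>s''\<in>UNIV. w$s'' * (if s'' = s then 1 else 0)) = (\<Sum>s''\<in>UNIV. if s'' = s then w$s'' else 0)"
          by (intro sum.cong) auto
        also have "\<dots> = w$s" by simp
        finally show ?thesis by simp
      qed
      finally have ineq: "0 \<le> \<alpha> * c s a + w$s - (\<Sum>s''\<in>UNIV. w$s'' * p s'')" .
      have "(\<Sum>s'\<in>UNIV. p s' * x s') = - (\<Sum>s''\<in>UNIV. w$s'' * p s'') / \<alpha>"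
        by (simp add: x_def sum_divide_distrib sum_negf mult.commute)
      then show ?thesis using ineq \<alpha>p by (simp add: x_def field_simps)
    qed
    have "x s - c s a - (\<Sum>s'\<in>UNIV. Phat s a s' * x s') \<le> CBmin D Phat eps s a x"
    proof (rule CBmin_ge[OF a])
      fix p assume p: "p \<in> Peps D Phat eps s a"
      have "(\<Sum>s'\<in>UNIV. (p s' - Phat s a s') * x s') = (\<Sum>s'\<in>UNIV. p s' * x s') - (\<Sum>s'\<in>UNIV. Phat s a s' * x s')"
        by (simp add: left_diff_distrib sum_subtractf)
      then show "x s - c s a - (\<Sum>s'\<in>UNIV. Phat s a s' * x s') \<le> (\<Sum>s'\<in>UNIV. (p s' - Phat s a s') * x s')"
        using key[OF p] by simp
    qed
    then show "x s \<le> c s a + (\<Sum>s'\<in>UNIV. Phat s a s' * x s') + CBmin D Phat eps s a x" by simp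
  qed
  show ?thesis using xin rx by blast
qed

end

theorem mainTheorem3:
  fixes A :: "'s::finite \<Rightarrow> 'a set"
    and c :: "'s \<Rightarrow> 'a \<Rightarrow> real"
    and Phat :: "'s \<Rightarrow> 'a \<Rightarrow> 's \<Rightarrow> real"
    and D :: "('s \<Rightarrow> real) \<Rightarrow> ('s \<Rightarrow> real) \<Rightarrow> real"
    and eps :: "'s \<Rightarrow> 'a \<Rightarrow> real"
  assumes fin_A: "\<And>s. finite (A s)"
    and cost: "\<And>s a. a \<in> A s \<Longrightarrow> 0 \<le> c s a \<and> c s a \<le> 1"
    and Phat_nonneg: "\<And>s a s'. a \<in> A s \<Longrightarrow> 0 \<le> Phat s a s'"
    and Phat_sub: "\<And>s a. a \<in> A s \<Longrightarrow> (\<Sum>s'\<in>UNIV. Phat s a s') \<le> 1"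
    and D_ok: "divergence_ok D"
    and eps_pos: "\<And>s a. a \<in> A s \<Longrightarrow> 0 < eps s a"
    and LP_feasible: "\<exists>q. (\<forall>s. \<forall>a\<in>A s. 0 \<le> q s a) \<and>
        (\<forall>s. (\<Sum>a\<in>A s. q s a) = 1 + (\<Sum>s'\<in>UNIV. \<Sum>a\<in>A s'. q s' a * Phat s' a s))"
  shows "(SUP x\<in>feasA A c D Phat eps. ereal (\<Sum>s\<in>UNIV. x s))
       = (INF qP\<in>feasB A D Phat eps. ereal (occ_cost A c (fst qP)))"
proof -
  interpret ssp A c Phat D eps
    using fin_A cost Phat_nonneg Phat_sub D_ok eps_pos by unfold_locales auto
  obtain q0 where q0: "\<forall>s. \<forall>a\<in>A s. 0 \<le> q0 s a"
      "\<forall>s. (\<Sum>a\<in>A s. q0 s a) = 1 + (\<Sum>s'\<in>UNIV. \<Sum>a\<in>A s'. q0 s' a * Phat s' a s)"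
    using LP_feasible by blast
  show ?thesis
  proof (rule antisym)
    show "(SUP x\<in>feasA A c D Phat eps. ereal (\<Sum>s\<in>UNIV. x s))
       \<le> (INF qP\<in>feasB A D Phat eps. ereal (occ_cost A c (fst qP)))"
    proof (rule SUP_least, rule INF_greatest)
      fix x qP assume x: "x \<in> feasA A c D Phat eps" and qP: "qP \<in> feasB A D Phat eps"
      obtain q P where qPe: "qP = (q, P)" by (cases qP)
      show "ereal (\<Sum>s\<in>UNIV. x s) \<le> ereal (occ_cost A c (fst qP))"
        using weak[OF x qP[unfolded qPe]] qPe by simp
    qed
  next
    show "(INF qP\<in>feasB A D Phat eps. ereal (occ_cost A c (fst qP)))
       \<le> (SUP x\<in>feasA A c D Phat eps. ereal (\<Sum>s\<in>UNIV. x s))"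
    proof (rule dense_le)
      fix y assume y: "y < (INF qP\<in>feasB A D Phat eps. ereal (occ_cost A c (fst qP)))"
      show "y \<le> (SUP x\<in>feasA A c D Phat eps. ereal (\<Sum>s\<in>UNIV. x s))"
      proof (cases y)
        case (real r)
        obtain x where x: "x \<in> feasA A c D Phat eps" "r < (\<Sum>s\<in>UNIV. x s)"
          using strong[OF q0(1) q0(2)] y real by blast
        have "ereal r \<le> ereal (\<Sum>s\<in>UNIV. x s)" using x(2) by simp
        also have "\<dots> \<le> (SUP x\<in>feasA A c D Phat eps. ereal (\<Sum>s\<in>UNIV. x s))"
          by (rule SUP_upper[OF x(1)])
        finally show ?thesis using real by simp
      next
        case PInf then show ?thesis using y by simp
      next
        case MInf then show ?thesis by simp
      qed
    qed
  qed
qed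

end
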